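(* Let $F\in\mathcal C^0(\mathbb C^m)$ have polynomial growth, let $p\ge2$, and let $a_2(u),\dots,a_p(u)$ be the polynomials in $(u,\bar u)$ described in the context (in particular each satisfies $a_j(0)=0$, $da_j(0)=0$). Then, for $k$ large, both sides below are well defined and finite, and $$\int_{\mathbb C^m}G\Big(e^{-|u|^2}\Big[1+\sum_{j=2}^pa_j(u)k^{-j/2}\Big]\Big)F(u)\,\nu_u=\frac1{4\pi^2}\sum_{n=1}^\infty\frac1{n^2}\int_{\mathbb C^m}e^{-n|u|^2}\Big[1+\sum_{j=2}^pb_{pj}(u,n)k^{-j/2}\Big]F(u)\,\nu_u+O(k^{-p/2-1/4}),$$ where $b_{pj}(u,n)=B_{pj}(a_2(u),\dots,a_p(u);n)$.
   Context: $G(t)=\frac1{4\pi^2}\sum_{n\ge1}t^n/n^2$ for $-1\le t\le1$; $\nu_u$ is Euclidean volume on $\mathbb C^m$; $F$ has polynomial growth if $|F(u)|=O(1+|u|^r)$ for some $r$. For $j\ge2$ let $\mathcal P(j)=\{(r_2,\dots,r_p)\in\mathbb N^{p-1}:\sum_{\lambda=2}^p\lambda r_\lambda=j\}$; for $\mathbf r=(r_2,\dots,r_p)$ with $|\mathbf r|=r_2+\cdots+r_p$ and $n\in\mathbb Z_+$, ${n\choose\mathbf r}=\frac{n(n-1)\cdots(n-|\mathbf r|+1)}{r_2!\cdots r_p!}$; and $B_{pj}(C_2,\dots,C_p;n)=\sum_{\mathbf r\in\mathcal P(j)}{n\choose\mathbf r}\prod_{\lambda=2}^pC_\lambda^{r_\lambda}$,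 so that $(1+\sum_{j=2}^pC_jx^j)^n=1+\sum_{j=2}^{np}B_{pj}x^j$. Setting: $(L,h)\to M$ is a positive Hermitian holomorphic line bundle on a compact complex $m$-manifold, $\omega=\frac i2\Theta_h$, $H^0(M,L^k)$ has inner product $\int h^k(s_1,\bar s_2)\omega^m/m!$, $P_k(z,w)=|\Pi_k(z,w)|/(\Pi_k(z,z)\Pi_k(w,w))^{1/2}$ with $|\Pi_k(z,w)|=\|\sum_jS^k_j(z)\otimes\overline{S^k_j(w)}\|_{h^k\otimes h^k}$ for an orthonormal basis $\{S^k_j\}$. At $z_0\in M$ the frame $e_L$ and coordinates are chosen so that $\phi=-\log h(e_L,\overline{e_L})$ satisfies $\phi(z_0+z)=|z|^2+\frac14\sum\frac{\partial^4\phi}{\partial z^p\partial z^j\partial\bar z^q\partial\bar z^l}(z_0)z^pz^j\bar z^q\bar z^l+O(|z|^5)$; then $P_k(z_0+\frac u{\sqrt k},z_0)^2=e^{-|u|^2}[1+\sum_{r=2}^nk^{-r/2}a_r(u)+k^{-(n+1)/2}\widetilde E_{kn}(u)]$ with $a_2(u)=\frac14R_{z_0}(u,\bar u,u,\bar u)$ (the curvature tensor evaluated as $\sum R_{p\bar qj\bar l}(z_0)u^p\bar u^qu^j\bar u^l$), $a_r$ polynomials of degree $\le5r$ and parity $r$ with $a_r(0)=0$, $da_r(0)=0$, and $|\widetilde E_{kn}(u)|\le c|u|^2k^{\varepsilon}$ for $|u|<b\sqrt{\log k}$. These $a_r$ are the polynomials in the claim. *)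

theory Defs
  imports "HOL-Analysis.Analysis"
begin

text \<open>G(t) = 1/(4 pi^2) * sum_{n>=1} t^n / n^2  (meaningful for -1 <= t <= 1).\<close>
definition Gfun :: "real \<Rightarrow> real" where
  "Gfun t = (1 / (4 * pi\<^sup>2)) * (\<Sum>n. t ^ Suc n / (real (Suc n))\<^sup>2)"

text \<open>Real polynomial of total degree at most d in the real coordinates
  (Re u_i, Im u_i) of u in C^m, i.e. a polynomial in (u, conj u) with real values.\<close>
definition poly_fun_deg :: "nat \<Rightarrow> (complex^'m \<Rightarrow> real) \<Rightarrow> bool" where
  "poly_fun_deg d f \<longleftrightarrow>
     (\<exists>c :: ('m \<Rightarrow> nat \<times> nat) \<Rightarrow> real. \<forall>u.
        f u = (\<Sum>\<alpha>\<in>{\<alpha>. (\<Sum>i\<in>UNIV. fst (\<alpha> i) + snd (\<alpha> i)) \<le> d}.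
                 c \<alpha> * (\<Prod>i\<in>UNIV. Re (u $ i) ^ fst (\<alpha> i) * Im (u $ i) ^ snd (\<alpha> i))))"

text \<open>P(j) = {(r_2,...,r_p) : sum_{l=2}^p l r_l = j}, encoded as functions nat => nat
  supported in {2..p}.\<close>
definition Pset :: "nat \<Rightarrow> nat \<Rightarrow> (nat \<Rightarrow> nat) set" where
  "Pset p j = {r. (\<forall>l. l \<notin> {2..p} \<longrightarrow> r l = 0) \<and> (\<Sum>l\<in>{2..p}. l * r l) = j}"

definition multichoose :: "nat \<Rightarrow> nat \<Rightarrow> (nat \<Rightarrow> nat) \<Rightarrow> real" where
  "multichoose p n r = (\<Prod>i<(\<Sum>l\<in>{2..p}. r l). real n - real i) / (\<Prod>l\<in>{2..p}. fact (r l))"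

definition Bpj :: "nat \<Rightarrow> nat \<Rightarrow> (nat \<Rightarrow> real) \<Rightarrow> nat \<Rightarrow> real" where
  "Bpj p j C n = (\<Sum>r\<in>Pset p j. multichoose p n r * (\<Prod>l\<in>{2..p}. C l ^ r l))"

end

theory Submission
  imports Defs "HOL-Computational_Algebra.Polynomial" "HOL-Probability.Distributions"
begin

definition ff :: "nat \<Rightarrow> nat \<Rightarrow> real" where
  "ff n q = (\<Prod>i<q. real n - real i)"

lemma ff_Suc_Suc: "ff (Suc n) (Suc q) = real (Suc n) * ff n q"
  unfolding ff_def by (subst prod.lessThan_Suc_shift) simp

lemma ff_Suc_right: "ff n (Suc q) = (real n - real q) * ff n q"
  unfolding ff_def by simp

lemma ff_Suc: "ff (Suc n) q = ff n q + real q * ff n (q - 1)"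
proof (cases q)
  case 0 then show ?thesis by (simp add: ff_def)
next
  case (Suc q')
  have e1: "ff (Suc n) (Suc q') = real (Suc n) * ff n q'" by (rule ff_Suc_Suc)
  have e2: "ff n (Suc q') = (real n - real q') * ff n q'" by (rule ff_Suc_right)
  show ?thesis unfolding Suc using e1 e2 by (simp add: algebra_simps)
qed

lemma ff_nonneg: "ff n q \<ge> 0"
proof (cases "q \<le> n")
  case True then show ?thesis unfolding ff_def by (intro prod_nonneg) auto
next
  case False
  then have "n \<in> {..<q}" by auto
  then have "ff n q = 0" unfolding ff_def by (intro prod_zero) auto
  then show ?thesis by simp
qed

lemma multichoose_ff: "multichoose p n r = ff n (\<Sum>l\<in>{2..p}. r l) / (\<Prod>l\<in>{2..p}. fact (r l))"
  by (simp add: multichoose_def ff_def)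

lemma multichoose_nonneg: "multichoose p n r \<ge> 0"
  unfolding multichoose_ff by (intro divide_nonneg_pos ff_nonneg prod_pos) auto

lemma Pset_finite: "finite (Pset p j)"
proof -
  have "Pset p j \<subseteq> {f. \<forall>x. (x \<in> {2..p} \<longrightarrow> f x \<in> {0..j}) \<and> (x \<notin> {2..p} \<longrightarrow> f x = 0)}"
  proof
    fix r assume r: "r \<in> Pset p j"
    have "r x \<le> j" if "x \<in> {2..p}" for x
    proof -
      have "r x \<le> x * r x" using that by simp
      also have "\<dots> \<le> (\<Sum>l\<in>{2..p}. l * r l)" using that by (intro member_le_sum) auto
      finally show ?thesis using r by (simp add: Pset_def)
    qed
    then show "r \<in> {f. \<forall>x. (x \<in> {2..p} \<longrightarrow> f x \<in> {0..j}) \<and> (x \<notin> {2..p} \<longrightarrow> f x = 0)}"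
      using r by (auto simp: Pset_def)
  qed
  moreover have "finite {f. \<forall>x. (x \<in> {2..p} \<longrightarrow> f x \<in> {0..j}) \<and> (x \<notin> {2..p} \<longrightarrow> f x = (0::nat))}"
    by (intro finite_set_of_finite_funs) auto
  ultimately show ?thesis by (rule finite_subset)
qed

lemma sum_upd: "finite A \<Longrightarrow> l \<in> A \<Longrightarrow> (\<Sum>i\<in>A. g i ((r(l := v)) i)) = (\<Sum>i\<in>A. g i (r i)) - g l (r l) + g l v"
  for g :: "nat \<Rightarrow> nat \<Rightarrow> 'a::ab_group_add"
proof -
  assume A: "finite A" "l \<in> A"
  have "(\<Sum>i\<in>A. g i ((r(l := v)) i)) = g l v + (\<Sum>i\<in>A - {l}. g i ((r(l := v)) i))"
    using A by (simp add: sum.remove)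
  also have "(\<Sum>i\<in>A - {l}. g i ((r(l := v)) i)) = (\<Sum>i\<in>A - {l}. g i (r i))"
    by (intro sum.cong) auto
  also have "\<dots> = (\<Sum>i\<in>A. g i (r i)) - g l (r l)" using A by (simp add: sum.remove)
  finally show ?thesis by simp
qed

lemma prod_upd: "finite A \<Longrightarrow> l \<in> A \<Longrightarrow> (\<Prod>i\<in>A. g i ((r(l := v)) i)) * g l (r l) = (\<Prod>i\<in>A. g i (r i)) * g l v"
  for g :: "nat \<Rightarrow> nat \<Rightarrow> 'a::comm_ring_1"
proof -
  assume A: "finite A" "l \<in> A"
  have "(\<Prod>i\<in>A. g i ((r(l := v)) i)) = g l v * (\<Prod>i\<in>A - {l}. g i ((r(l := v)) i))"
    using A by (simp add: prod.remove)
  also have "(\<Prod>i\<in>A - {l}. g i ((r(l := v)) i)) = (\<Prod>i\<in>A - {l}. g i (r i))"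
    by (intro prod.cong) auto
  finally show ?thesis using A by (simp add: prod.remove algebra_simps)
qed

lemma sum_upd': "finite A \<Longrightarrow> l \<in> A \<Longrightarrow> (\<Sum>i\<in>A. g i ((r(l := v)) i)) = g l v + (\<Sum>i\<in>A - {l}. g i (r i))"
  for g :: "nat \<Rightarrow> nat \<Rightarrow> 'a::comm_monoid_add"
  by (simp add: sum.remove)

lemma prod_upd': "finite A \<Longrightarrow> l \<in> A \<Longrightarrow> (\<Prod>i\<in>A. g i ((r(l := v)) i)) = g l v * (\<Prod>i\<in>A - {l}. g i (r i))"
  for g :: "nat \<Rightarrow> nat \<Rightarrow> 'a::comm_monoid_mult"
  by (simp add: prod.remove)

lemma Bpj_key:
  assumes l: "l \<in> {2..p}"
  shows "(\<Sum>r\<in>Pset p j. real (r l) * ff n ((\<Sum>m\<in>{2..p}. r m) - 1) / (\<Prod>m\<in>{2..p}. fact (r m))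
            * (\<Prod>m\<in>{2..p}. C m ^ r m))
         = (if l \<le> j then C l * Bpj p (j - l) C n else 0)"
proof (cases "l \<le> j")
  case False
  have "r l = 0" if "r \<in> Pset p j" for r
  proof (rule ccontr)
    assume "r l \<noteq> 0"
    then have "l \<le> l * r l" by simp
    also have "\<dots> \<le> (\<Sum>m\<in>{2..p}. m * r m)" using l by (intro member_le_sum) auto
    finally show False using that False by (simp add: Pset_def)
  qed
  then show ?thesis using False by (auto intro!: sum.neutral)
next
  case True
  let ?A = "{2..p::nat}"
  define f where "f r = real (r l) * ff n ((\<Sum>m\<in>?A. r m) - 1) / (\<Prod>m\<in>?A. fact (r m))
            * (\<Prod>m\<in>?A. C m ^ r m)" for r :: "nat \<Rightarrow> nat"
  have fin: "finite ?A" by simp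
  have "(\<Sum>r\<in>Pset p j. f r) = (\<Sum>r\<in>Pset p j. if 0 < r l then f r else 0)"
    by (intro sum.cong) (auto simp: f_def)
  also have "\<dots> = (\<Sum>r\<in>{r\<in>Pset p j. 0 < r l}. f r)"
    by (simp add: sum.inter_filter Pset_finite)
  also have "\<dots> = (\<Sum>r'\<in>Pset p (j - l). f (r'(l := r' l + 1)))"
  proof (rule sum.reindex_bij_witness[where i = "\<lambda>r'. r'(l := r' l + 1)" and j = "\<lambda>r. r(l := r l - 1)"])
    fix r assume r: "r \<in> {r\<in>Pset p j. 0 < r l}"
    then show "(r(l := r l - 1))(l := (r(l := r l - 1)) l + 1) = r" by auto
    have w: "(\<Sum>m\<in>?A. m * r m) = j" "\<forall>m. m \<notin> ?A \<longrightarrow> r m = 0" using r by (auto simp: Pset_def)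
    have w2: "(\<Sum>m\<in>?A. m * r m) = l * r l + (\<Sum>m\<in>?A - {l}. m * r m)"
      using l by (simp add: sum.remove)
    have "(\<Sum>m\<in>?A. m * (r(l := r l - 1)) m) = l * (r l - 1) + (\<Sum>m\<in>?A - {l}. m * r m)"
      using sum_upd'[OF fin l, of "\<lambda>m x. m * x"] by simp
    also have "\<dots> = j - l" using w w2 r by (simp add: diff_mult_distrib2)
    finally show "r(l := r l - 1) \<in> Pset p (j - l)" using w l by (auto simp: Pset_def)
  next
    fix r' assume r': "r' \<in> Pset p (j - l)"
    then show "(r'(l := r' l + 1))(l := (r'(l := r' l + 1)) l - 1) = r'" by auto
    have w: "(\<Sum>m\<in>?A. m * r' m) = j - l" "\<forall>m. m \<notin> ?A \<longrightarrow> r' m = 0" using r' by (auto simp: Pset_def)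
    have w2: "(\<Sum>m\<in>?A. m * r' m) = l * r' l + (\<Sum>m\<in>?A - {l}. m * r' m)"
      using l by (simp add: sum.remove)
    have "(\<Sum>m\<in>?A. m * (r'(l := r' l + 1)) m) = l * (r' l + 1) + (\<Sum>m\<in>?A - {l}. m * r' m)"
      using sum_upd'[OF fin l, of "\<lambda>m x. m * x"] by simp
    also have "\<dots> = j" using w w2 True by simp
    finally show "r'(l := r' l + 1) \<in> {r\<in>Pset p j. 0 < r l}" using w l by (auto simp: Pset_def)
  qed simp
  also have "\<dots> = (\<Sum>r'\<in>Pset p (j - l). C l * (multichoose p n r' * (\<Prod>m\<in>?A. C m ^ r' m)))"
  proof (intro sum.cong refl)
    fix r' :: "nat \<Rightarrow> nat"
    let ?r = "r'(l := r' l + 1)"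
    have s1: "(\<Sum>m\<in>?A. ?r m) = r' l + 1 + (\<Sum>m\<in>?A - {l}. r' m)"
      by (rule sum_upd'[OF fin l, of "\<lambda>m x. x"])
    have s0: "(\<Sum>m\<in>?A. r' m) = r' l + (\<Sum>m\<in>?A - {l}. r' m)"
      using l by (simp add: sum.remove)
    have d1: "(\<Prod>m\<in>?A. fact (?r m)) = fact (r' l + 1) * (\<Prod>m\<in>?A - {l}. fact (r' m) :: real)"
      by (rule prod_upd'[OF fin l, of "\<lambda>m x. fact x :: real"])
    have d0: "(\<Prod>m\<in>?A. fact (r' m)) = fact (r' l) * (\<Prod>m\<in>?A - {l}. fact (r' m) :: real)"
      using l by (simp add: prod.remove)
    have c1: "(\<Prod>m\<in>?A. C m ^ ?r m) = C l ^ (r' l + 1) * (\<Prod>m\<in>?A - {l}. C m ^ r' m)"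
      by (rule prod_upd'[OF fin l, of "\<lambda>m x. C m ^ x"])
    have c0: "(\<Prod>m\<in>?A. C m ^ r' m) = C l ^ r' l * (\<Prod>m\<in>?A - {l}. C m ^ r' m)"
      using l by (simp add: prod.remove)
    have pos: "(\<Prod>m\<in>?A - {l}. fact (r' m) :: real) > 0" by (intro prod_pos) auto
    show "f ?r = C l * (multichoose p n r' * (\<Prod>m\<in>?A. C m ^ r' m))"
    proof -
      define P where "P = (\<Prod>m\<in>?A - {l}. fact (r' m) :: real)"
      define Q where "Q = (\<Prod>m\<in>?A - {l}. C m ^ r' m)"
      define X where "X = ff n (r' l + (\<Sum>m\<in>?A - {l}. r' m))"
      have fp: "(fact (r' l)::real) > 0" by simp
      have "f ?r = real (r' l + 1) * X / (fact (r' l + 1) * P) * (C l ^ (r' l + 1) * Q)"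
        unfolding f_def s1 d1 c1 X_def P_def Q_def by simp
      also have "\<dots> = C l * (X / (fact (r' l) * P) * (C l ^ r' l * Q))"
      proof -
        have gen: "N * X / (N * F * P) * (c * w * Q) = c * (X / (F * P) * (w * Q))"
          if "N > 0" "F > 0" "P > 0" for N F P X c w Q :: real
          using that by (simp add: field_simps)
        have "(fact (r' l + 1)::real) = real (r' l + 1) * fact (r' l)" by simp
        moreover have "C l ^ (r' l + 1) = C l * C l ^ r' l" by simp
        ultimately show ?thesis using gen[of "real (r' l + 1)" "fact (r' l)" P X "C l" "C l ^ r' l" Q] pos fp
          unfolding P_def by simp
      qed
      also have "\<dots> = C l * (multichoose p n r' * (\<Prod>m\<in>?A. C m ^ r' m))"
        unfolding multichoose_ff s0 d0 c0 X_def P_def Q_def by simp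
      finally show ?thesis .
    qed
  qed
  also have "\<dots> = C l * Bpj p (j - l) C n"
    by (simp add: Bpj_def sum_distrib_left)
  finally show ?thesis using True by (simp add: f_def)
qed

lemma Bpj_Suc:
  "Bpj p j C (Suc n) = Bpj p j C n + (\<Sum>l\<in>{2..p}. if l \<le> j then C l * Bpj p (j - l) C n else 0)"
proof -
  let ?A = "{2..p::nat}"
  define g where "g r l = real (r l) * ff n ((\<Sum>m\<in>?A. r m) - 1) / (\<Prod>m\<in>?A. fact (r m))
            * (\<Prod>m\<in>?A. C m ^ r m)" for r :: "nat \<Rightarrow> nat" and l
  have "Bpj p j C (Suc n) = (\<Sum>r\<in>Pset p j. multichoose p n r * (\<Prod>m\<in>?A. C m ^ r m) + (\<Sum>l\<in>?A. g r l))"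
    unfolding Bpj_def
  proof (intro sum.cong refl)
    fix r :: "nat \<Rightarrow> nat"
    have "real (\<Sum>m\<in>?A. r m) = (\<Sum>l\<in>?A. real (r l))" by simp
    then show "multichoose p (Suc n) r * (\<Prod>m\<in>?A. C m ^ r m) =
        multichoose p n r * (\<Prod>m\<in>?A. C m ^ r m) + (\<Sum>l\<in>?A. g r l)"
      unfolding multichoose_ff ff_Suc g_def
      by (simp add: add_divide_distrib distrib_right sum_distrib_right sum_divide_distrib)
  qed
  also have "\<dots> = Bpj p j C n + (\<Sum>l\<in>?A. \<Sum>r\<in>Pset p j. g r l)"
    by (simp add: sum.distrib Bpj_def sum.swap[of _ ?A])
  also have "(\<Sum>l\<in>?A. \<Sum>r\<in>Pset p j. g r l) = (\<Sum>l\<in>?A. if l \<le> j then C l * Bpj p (j - l) C n else 0)"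
    by (intro sum.cong refl) (unfold g_def, rule Bpj_key)
  finally show ?thesis .
qed

lemma Pset_0: "Pset p 0 = {\<lambda>_. 0}"
proof -
  have "r = (\<lambda>_. 0)" if "r \<in> Pset p 0" for r
  proof
    fix l
    show "r l = 0"
    proof (cases "l \<in> {2..p}")
      case True
      have "l * r l \<le> (\<Sum>m\<in>{2..p}. m * r m)" using True by (intro member_le_sum) auto
      then show ?thesis using that True by (simp add: Pset_def)
    qed (use that in \<open>auto simp: Pset_def\<close>)
  qed
  then show ?thesis by (auto simp: Pset_def)
qed

lemma Bpj_0: "Bpj p 0 C n = 1"
  by (simp add: Bpj_def Pset_0 multichoose_def)

lemma Bpj_zero_n: "j > 0 \<Longrightarrow> Bpj p j C 0 = 0"
proof -
  assume j: "j > 0"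
  have "multichoose p 0 r = 0" if "r \<in> Pset p j" for r
  proof -
    have "(\<Sum>l\<in>{2..p}. r l) \<noteq> 0"
    proof
      assume "(\<Sum>l\<in>{2..p}. r l) = 0"
      then have "\<forall>l\<in>{2..p}. r l = 0" by simp
      then have "(\<Sum>l\<in>{2..p}. l * r l) = 0" by simp
      then show False using that j by (simp add: Pset_def)
    qed
    then have "0 \<in> {..<(\<Sum>l\<in>{2..p}. r l)}" by (simp only: lessThan_iff neq0_conv)
    then show ?thesis unfolding multichoose_ff ff_def by (intro divide_eq_0_iff[THEN iffD2] disjI1 prod_zero bexI[of _ 0]) auto
  qed
  then show ?thesis by (simp add: Bpj_def)
qed

definition Qpoly :: "nat \<Rightarrow> (nat \<Rightarrow> real) \<Rightarrow> real poly" where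
  "Qpoly p C = 1 + (\<Sum>l\<in>{2..p}. monom (C l) l)"

lemma coeff_Qpoly: "coeff (Qpoly p C) i = (if i = 0 then 1 else 0) + (if i \<in> {2..p} then C i else 0)"
proof -
  have "coeff (Qpoly p C) i = (if i = 0 then 1 else 0) + (\<Sum>l\<in>{2..p}. if l = i then C l else 0)"
    by (simp add: Qpoly_def coeff_sum coeff_monom)
  also have "(\<Sum>l\<in>{2..p}. if l = i then C l else 0) = (if i \<in> {2..p} then C i else 0)"
    by (simp add: sum.delta')
  finally show ?thesis .
qed

lemma coeff_Qpoly_power: "coeff (Qpoly p C ^ n) j = Bpj p j C n"
proof (induction n arbitrary: j)
  case 0
  then show ?case by (cases "j = 0") (auto simp: Bpj_0 Bpj_zero_n)
next
  case (Suc n)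
  have "coeff (Qpoly p C ^ Suc n) j = (\<Sum>i\<le>j. coeff (Qpoly p C) i * Bpj p (j - i) C n)"
    by (simp add: coeff_mult Suc.IH)
  also have "\<dots> = (\<Sum>i\<le>j. (if i = 0 then Bpj p (j - i) C n else 0)) +
       (\<Sum>i\<le>j. (\<Sum>l\<in>{2..p}. if l = i then C l * Bpj p (j - l) C n else 0))"
    unfolding sum.distrib[symmetric]
  proof (intro sum.cong refl)
    fix i
    have "(\<Sum>l\<in>{2..p}. if l = i then C l * Bpj p (j - l) C n else 0) = (if i \<in> {2..p} then C i * Bpj p (j - i) C n else 0)"
      by (simp add: sum.delta')
    then show "coeff (Qpoly p C) i * Bpj p (j - i) C n = (if i = 0 then Bpj p (j - i) C n else 0) +
       (\<Sum>l\<in>{2..p}. if l = i then C l * Bpj p (j - l) C n else 0)"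
      by (simp add: coeff_Qpoly distrib_right)
  qed
  also have "(\<Sum>i\<le>j. (if i = 0 then Bpj p (j - i) C n else 0)) = Bpj p j C n"
    by (simp add: sum.delta)
  also have "(\<Sum>i\<le>j. (\<Sum>l\<in>{2..p}. if l = i then C l * Bpj p (j - l) C n else 0))
      = (\<Sum>l\<in>{2..p}. \<Sum>i\<le>j. if l = i then C l * Bpj p (j - l) C n else 0)"
    by (rule sum.swap)
  also have "\<dots> = (\<Sum>l\<in>{2..p}. if l \<le> j then C l * Bpj p (j - l) C n else 0)"
    by (intro sum.cong refl) (simp add: sum.delta)
  finally show ?case by (simp add: Bpj_Suc)
qed

lemma degree_Qpoly: "degree (Qpoly p C) \<le> p"
proof -
  have "degree (\<Sum>l\<in>{2..p}. monom (C l) l) \<le> p"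
    by (rule degree_sum_le) (auto intro: order.trans[OF degree_monom_le])
  then show ?thesis unfolding Qpoly_def using degree_add_le_max[of 1 "\<Sum>l\<in>{2..p}. monom (C l) l"] by auto
qed

lemma poly_Qpoly: "poly (Qpoly p C) y = 1 + (\<Sum>l\<in>{2..p}. C l * y ^ l)"
  by (simp add: Qpoly_def poly_sum poly_monom)

lemma expansion:
  "(1 + (\<Sum>l\<in>{2..p}. C l * y ^ l)) ^ n = (\<Sum>j\<le>p * n. Bpj p j C n * y ^ j)"
proof -
  have deg: "degree (Qpoly p C ^ n) \<le> p * n"
    using degree_power_le[of "Qpoly p C" n] degree_Qpoly[of p C]
    by (metis le_trans mult.commute mult_le_mono1)
  have "(1 + (\<Sum>l\<in>{2..p}. C l * y ^ l)) ^ n = poly (Qpoly p C ^ n) y"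
    by (simp add: poly_Qpoly)
  also have "\<dots> = (\<Sum>j\<le>degree (Qpoly p C ^ n). coeff (Qpoly p C ^ n) j * y ^ j)"
    by (rule poly_altdef)
  also have "\<dots> = (\<Sum>j\<le>p * n. coeff (Qpoly p C ^ n) j * y ^ j)"
    using deg by (intro sum.mono_neutral_left) (auto simp: coeff_eq_0)
  finally show ?thesis by (simp add: coeff_Qpoly_power)
qed

lemma expansion_N:
  assumes "p * n \<le> N"
  shows "(1 + (\<Sum>l\<in>{2..p}. C l * y ^ l)) ^ n = (\<Sum>j\<le>N. Bpj p j C n * y ^ j)"
proof -
  have deg: "degree (Qpoly p C ^ n) \<le> N"
    using degree_power_le[of "Qpoly p C" n] degree_Qpoly[of p C] assms
    by (metis le_trans mult.commute mult_le_mono1)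
  have "(1 + (\<Sum>l\<in>{2..p}. C l * y ^ l)) ^ n = poly (Qpoly p C ^ n) y"
    by (simp add: poly_Qpoly)
  also have "\<dots> = (\<Sum>j\<le>degree (Qpoly p C ^ n). coeff (Qpoly p C ^ n) j * y ^ j)"
    by (rule poly_altdef)
  also have "\<dots> = (\<Sum>j\<le>N. coeff (Qpoly p C ^ n) j * y ^ j)"
    using deg by (intro sum.mono_neutral_left) (auto simp: coeff_eq_0)
  finally show ?thesis by (simp add: coeff_Qpoly_power)
qed

lemma Pset_1: "Pset p 1 = {}"
proof -
  have False if "r \<in> Pset p 1" for r
  proof -
    have s: "(\<Sum>l\<in>{2..p}. l * r l) = 1" using that by (simp add: Pset_def)
    then obtain l where l: "l \<in> {2..p}" "l * r l \<noteq> 0"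
      by (metis (no_types, lifting) sum.neutral zero_neq_one)
    have "l * r l \<le> (\<Sum>l\<in>{2..p}. l * r l)" using l by (intro member_le_sum) auto
    moreover have "2 \<le> l * r l" using l by (cases "r l") auto
    ultimately show False using s by simp
  qed
  then show ?thesis by auto
qed

lemma Bpj_1: "Bpj p 1 C n = 0"
  unfolding Bpj_def Pset_1 by simp

lemma Bpj_1': "Bpj p (Suc 0) C n = 0"
  using Bpj_1 by simp

lemma Bpj_abs: "\<bar>Bpj p j C n\<bar> \<le> Bpj p j (\<lambda>l. \<bar>C l\<bar>) n"
proof -
  have "\<bar>Bpj p j C n\<bar> \<le> (\<Sum>r\<in>Pset p j. \<bar>multichoose p n r * (\<Prod>l\<in>{2..p}. C l ^ r l)\<bar>)"
    unfolding Bpj_def by (rule sum_abs)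
  also have "\<dots> = Bpj p j (\<lambda>l. \<bar>C l\<bar>) n"
    unfolding Bpj_def using multichoose_nonneg
    by (intro sum.cong refl) (simp add: abs_mult abs_prod power_abs)
  finally show ?thesis .
qed

lemma Bpj_nonneg: "(\<And>l. C l \<ge> 0) \<Longrightarrow> Bpj p j C n \<ge> 0"
  unfolding Bpj_def by (intro sum_nonneg mult_nonneg_nonneg multichoose_nonneg prod_nonneg) auto

lemma remainder:
  fixes C :: "nat \<Rightarrow> real"
  assumes p: "p \<ge> 2" and t: "0 \<le> t" "t \<le> \<tau>" and tau: "0 < \<tau>"
  shows "\<bar>(1 + (\<Sum>l\<in>{2..p}. C l * t ^ l)) ^ n - (1 + (\<Sum>j=2..p. Bpj p j C n * t ^ j))\<bar>
           \<le> (t / \<tau>) ^ (p + 1) * (1 + (\<Sum>l\<in>{2..p}. \<bar>C l\<bar> * \<tau> ^ l)) ^ n"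
proof -
  define N where "N = p + p * n"
  define B where "B j = Bpj p j C n" for j
  define B' where "B' j = Bpj p j (\<lambda>l. \<bar>C l\<bar>) n" for j
  have split: "{..N} = {..p} \<union> {Suc p..N}" unfolding N_def by auto
  have e1: "(1 + (\<Sum>l\<in>{2..p}. C l * t ^ l)) ^ n = (\<Sum>j\<le>N. B j * t ^ j)"
    unfolding B_def by (rule expansion_N) (simp add: N_def)
  also have "\<dots> = (\<Sum>j\<le>p. B j * t ^ j) + (\<Sum>j=Suc p..N. B j * t ^ j)"
    unfolding split by (rule sum.union_disjoint) auto
  finally have e1: "(1 + (\<Sum>l\<in>{2..p}. C l * t ^ l)) ^ n = (\<Sum>j\<le>p. B j * t ^ j) + (\<Sum>j=Suc p..N. B j * t ^ j)" .
  have "{..p} = insert 0 (insert 1 {2..p})" using p by auto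
  then have e2: "(\<Sum>j\<le>p. B j * t ^ j) = 1 + (\<Sum>j=2..p. B j * t ^ j)"
    by (simp add: B_def Bpj_0 Bpj_1')
  have "\<bar>(\<Sum>j=Suc p..N. B j * t ^ j)\<bar> \<le> (\<Sum>j=Suc p..N. \<bar>B j\<bar> * t ^ j)"
    using t by (auto intro!: order.trans[OF sum_abs] simp: abs_mult)
  also have "\<dots> \<le> (\<Sum>j=Suc p..N. B' j * ((t / \<tau>) ^ (p + 1) * \<tau> ^ j))"
  proof (intro sum_mono mult_mono)
    fix j assume j: "j \<in> {Suc p..N}"
    show "\<bar>B j\<bar> \<le> B' j" unfolding B_def B'_def by (rule Bpj_abs)
    have q: "0 \<le> t / \<tau>" "t / \<tau> \<le> 1" using t tau by auto
    have "t ^ j = (t / \<tau>) ^ j * \<tau> ^ j" using tau by (simp add: power_divide)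
    also have "\<dots> \<le> (t / \<tau>) ^ (p + 1) * \<tau> ^ j"
      using q j tau by (intro mult_right_mono power_decreasing) auto
    finally show "t ^ j \<le> (t / \<tau>) ^ (p + 1) * \<tau> ^ j" .
    show "0 \<le> B' j" unfolding B'_def by (rule Bpj_nonneg) simp
  qed (use t in auto)
  also have "\<dots> = (t / \<tau>) ^ (p + 1) * (\<Sum>j=Suc p..N. B' j * \<tau> ^ j)"
    by (simp add: sum_distrib_left algebra_simps)
  also have "\<dots> \<le> (t / \<tau>) ^ (p + 1) * (\<Sum>j\<le>N. B' j * \<tau> ^ j)"
    using t tau by (intro mult_left_mono sum_mono2) (auto simp: B'_def intro!: mult_nonneg_nonneg Bpj_nonneg)
  also have "(\<Sum>j\<le>N. B' j * \<tau> ^ j) = (1 + (\<Sum>l\<in>{2..p}. \<bar>C l\<bar> * \<tau> ^ l)) ^ n"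
    unfolding B'_def by (rule expansion_N[symmetric]) (simp add: N_def)
  finally have R: "\<bar>(\<Sum>j=Suc p..N. B j * t ^ j)\<bar> \<le> (t / \<tau>) ^ (p + 1) * (1 + (\<Sum>l\<in>{2..p}. \<bar>C l\<bar> * \<tau> ^ l)) ^ n" .
  have "(1 + (\<Sum>l\<in>{2..p}. C l * t ^ l)) ^ n - (1 + (\<Sum>j=2..p. Bpj p j C n * t ^ j)) = (\<Sum>j=Suc p..N. B j * t ^ j)"
    unfolding e1 e2 by (simp add: B_def)
  then show ?thesis using R by simp
qed


definition mono_deg :: "('m::finite \<Rightarrow> nat \<times> nat) \<Rightarrow> nat" where
  "mono_deg \<alpha> = (\<Sum>i\<in>UNIV. fst (\<alpha> i) + snd (\<alpha> i))"

definition mono_val :: "('m::finite \<Rightarrow> nat \<times> nat) \<Rightarrow> complex^'m \<Rightarrow> real" where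
  "mono_val \<alpha> u = (\<Prod>i\<in>UNIV. Re (u $ i) ^ fst (\<alpha> i) * Im (u $ i) ^ snd (\<alpha> i))"

lemma mono_val_scale: "mono_val \<alpha> (e *\<^sub>R u) = e ^ mono_deg \<alpha> * mono_val \<alpha> u"
proof -
  have "mono_val \<alpha> (e *\<^sub>R u) = (\<Prod>i\<in>UNIV. e ^ (fst (\<alpha> i) + snd (\<alpha> i)) * (Re (u $ i) ^ fst (\<alpha> i) * Im (u $ i) ^ snd (\<alpha> i)))"
    unfolding mono_val_def by (intro prod.cong refl) (simp add: power_mult_distrib power_add)
  also have "\<dots> = e ^ mono_deg \<alpha> * mono_val \<alpha> u"
    by (simp add: prod.distrib mono_deg_def mono_val_def power_sum)
  finally show ?thesis .
qed

lemma mono_val_deg0: "mono_deg \<alpha> = 0 \<Longrightarrow> mono_val \<alpha> u = 1"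
  unfolding mono_deg_def mono_val_def by simp

lemma mono_val_bound: "\<bar>mono_val \<alpha> u\<bar> \<le> norm u ^ mono_deg \<alpha>"
proof -
  have "\<bar>mono_val \<alpha> u\<bar> = (\<Prod>i\<in>UNIV. \<bar>Re (u $ i)\<bar> ^ fst (\<alpha> i) * \<bar>Im (u $ i)\<bar> ^ snd (\<alpha> i))"
    by (simp add: mono_val_def abs_prod abs_mult power_abs)
  also have "\<dots> \<le> (\<Prod>i\<in>UNIV. norm u ^ fst (\<alpha> i) * norm u ^ snd (\<alpha> i))"
  proof (intro prod_mono conjI mult_mono power_mono)
    fix i
    have "norm (u $ i) \<le> norm u" by (rule Finite_Cartesian_Product.norm_nth_le)
    then show "\<bar>Re (u $ i)\<bar> \<le> norm u" "\<bar>Im (u $ i)\<bar> \<le> norm u"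
      using abs_Re_le_cmod abs_Im_le_cmod order.trans by blast+
  qed auto
  also have "\<dots> = norm u ^ mono_deg \<alpha>"
    by (simp add: mono_deg_def power_sum prod.distrib power_add)
  finally show ?thesis .
qed

lemma pow_le_two_D: "2 \<le> k \<Longrightarrow> k \<le> D \<Longrightarrow> (x::real) \<ge> 0 \<Longrightarrow> x ^ k \<le> x ^ 2 + x ^ D"
proof (cases "x \<le> 1")
  case True
  assume "2 \<le> k" "x \<ge> 0"
  then have "x ^ k \<le> x ^ 2" using True by (intro power_decreasing) auto
  then show ?thesis using \<open>x \<ge> 0\<close> by (simp add: add_increasing2)
next
  case False
  assume "k \<le> D" "x \<ge> 0"
  then have "x ^ k \<le> x ^ D" using False by (intro power_increasing) auto
  then show ?thesis using \<open>x \<ge> 0\<close> by (simp add: add_increasing)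
qed

lemma poly_bound:
  fixes a :: "complex^'m \<Rightarrow> real"
  assumes pf: "poly_fun_deg d a" and a0: "a 0 = 0" and ad: "(a has_derivative (\<lambda>_. 0)) (at 0)"
    and dD: "d \<le> D" and D2: "2 \<le> D"
  shows "\<exists>c\<ge>0. \<forall>u. \<bar>a u\<bar> \<le> c * (norm u ^ 2 + norm u ^ D)"
proof -
  define A where "A = {\<alpha>::'m \<Rightarrow> nat \<times> nat. mono_deg \<alpha> \<le> d}"
  obtain c where c: "\<And>u. a u = (\<Sum>\<alpha>\<in>A. c \<alpha> * mono_val \<alpha> u)"
    using pf unfolding poly_fun_deg_def A_def mono_deg_def mono_val_def by blast
  have finA: "finite A"
  proof -
    have "A \<subseteq> {f. \<forall>x. (x \<in> UNIV \<longrightarrow> f x \<in> {0..d} \<times> {0..d}) \<and> (x \<notin> UNIV \<longrightarrow> f x = undefined)}"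
    proof
      fix \<alpha> assume "\<alpha> \<in> A"
      then have le: "(\<Sum>i\<in>UNIV. fst (\<alpha> i) + snd (\<alpha> i)) \<le> d" by (simp add: A_def mono_deg_def)
      have "\<alpha> x \<in> {0..d} \<times> {0..d}" for x
      proof -
        have "fst (\<alpha> x) + snd (\<alpha> x) \<le> (\<Sum>i\<in>UNIV. fst (\<alpha> i) + snd (\<alpha> i))"
          by (intro member_le_sum) auto
        with le show "\<alpha> x \<in> {0..d} \<times> {0..d}" by (cases "\<alpha> x") auto
      qed
      then show "\<alpha> \<in> {f. \<forall>x. (x \<in> UNIV \<longrightarrow> f x \<in> {0..d} \<times> {0..d}) \<and> (x \<notin> UNIV \<longrightarrow> f x = undefined)}"
        by auto
    qed
    moreover have "finite {f. \<forall>x. (x \<in> (UNIV::'m set) \<longrightarrow> f x \<in> {0..d} \<times> {0..d}) \<and> (x \<notin> UNIV \<longrightarrow> f x = undefined)}"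
      by (intro finite_set_of_finite_funs) auto
    ultimately show ?thesis by (rule finite_subset)
  qed
  have P0: "(\<Sum>\<alpha>\<in>A. if mono_deg \<alpha> = 0 then c \<alpha> * mono_val \<alpha> u else 0) = 0" for u
  proof -
    have "a 0 = (\<Sum>\<alpha>\<in>A. c \<alpha> * mono_val \<alpha> 0)" using c by simp
    also have "\<dots> = (\<Sum>\<alpha>\<in>A. if mono_deg \<alpha> = 0 then c \<alpha> * mono_val \<alpha> u else 0)"
    proof (intro sum.cong refl)
      fix \<alpha>
      have "mono_val \<alpha> 0 = 0 ^ mono_deg \<alpha> * mono_val \<alpha> u" using mono_val_scale[of \<alpha> 0 u] by simp
      then show "c \<alpha> * mono_val \<alpha> 0 = (if mono_deg \<alpha> = 0 then c \<alpha> * mono_val \<alpha> u else 0)" by auto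
    qed
    finally show ?thesis using a0 by simp
  qed
  have P1: "(\<Sum>\<alpha>\<in>A. if mono_deg \<alpha> = 1 then c \<alpha> * mono_val \<alpha> u else 0) = 0" for u
  proof -
    define g where "g e = a (e *\<^sub>R u)" for e :: real
    have g_eq: "g e = (\<Sum>\<alpha>\<in>A. c \<alpha> * mono_val \<alpha> u * e ^ mono_deg \<alpha>)" for e
      unfolding g_def c by (intro sum.cong refl) (simp add: mono_val_scale)
    have d1: "((\<lambda>e. e *\<^sub>R u) has_derivative (\<lambda>e. e *\<^sub>R u)) (at 0)"
      by (auto intro!: derivative_eq_intros)
    have "(g has_derivative (\<lambda>e. 0)) (at 0)"
      unfolding g_def using has_derivative_compose[OF d1, of a "\<lambda>_. 0"] ad by simp
    moreover have "(\<lambda>e::real. 0::real) = (*) 0" by auto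
    ultimately have D1: "(g has_real_derivative 0) (at 0)"
      by (simp add: has_field_derivative_def)
    have D2: "(g has_real_derivative (\<Sum>\<alpha>\<in>A. c \<alpha> * mono_val \<alpha> u * (real (mono_deg \<alpha>) * 0 ^ (mono_deg \<alpha> - Suc 0)))) (at 0)"
      unfolding g_eq[abs_def]
      by (intro DERIV_sum DERIV_cmult DERIV_pow)
    have "(\<Sum>\<alpha>\<in>A. c \<alpha> * mono_val \<alpha> u * (real (mono_deg \<alpha>) * 0 ^ (mono_deg \<alpha> - Suc 0))) = 0"
      using DERIV_unique[OF D2 D1] .
    moreover have "(\<Sum>\<alpha>\<in>A. c \<alpha> * mono_val \<alpha> u * (real (mono_deg \<alpha>) * 0 ^ (mono_deg \<alpha> - Suc 0)))
        = (\<Sum>\<alpha>\<in>A. if mono_deg \<alpha> = 1 then c \<alpha> * mono_val \<alpha> u else 0)"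
      by (intro sum.cong refl) auto
    ultimately show ?thesis by simp
  qed
  define M where "M = (\<Sum>\<alpha>\<in>A. \<bar>c \<alpha>\<bar>)"
  have "\<bar>a u\<bar> \<le> M * (norm u ^ 2 + norm u ^ D)" for u
  proof -
    have "a u = (\<Sum>\<alpha>\<in>A. if mono_deg \<alpha> = 0 then c \<alpha> * mono_val \<alpha> u else 0)
       + (\<Sum>\<alpha>\<in>A. if mono_deg \<alpha> = 1 then c \<alpha> * mono_val \<alpha> u else 0)
       + (\<Sum>\<alpha>\<in>A. if 2 \<le> mono_deg \<alpha> then c \<alpha> * mono_val \<alpha> u else 0)"
      unfolding c sum.distrib[symmetric] by (intro sum.cong refl) auto
    then have "a u = (\<Sum>\<alpha>\<in>A. if 2 \<le> mono_deg \<alpha> then c \<alpha> * mono_val \<alpha> u else 0)"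
      using P0 P1 by simp
    also have "\<bar>\<dots>\<bar> \<le> (\<Sum>\<alpha>\<in>A. \<bar>if 2 \<le> mono_deg \<alpha> then c \<alpha> * mono_val \<alpha> u else 0\<bar>)"
      by (rule sum_abs)
    also have "\<dots> \<le> (\<Sum>\<alpha>\<in>A. \<bar>c \<alpha>\<bar> * (norm u ^ 2 + norm u ^ D))"
    proof (intro sum_mono)
      fix \<alpha> assume "\<alpha> \<in> A"
      then have "mono_deg \<alpha> \<le> D" using dD by (simp add: A_def)
      then have "2 \<le> mono_deg \<alpha> \<Longrightarrow> \<bar>mono_val \<alpha> u\<bar> \<le> norm u ^ 2 + norm u ^ D"
        using mono_val_bound[of \<alpha> u] pow_le_two_D[of "mono_deg \<alpha>" D "norm u"] by simp
      then show "\<bar>if 2 \<le> mono_deg \<alpha> then c \<alpha> * mono_val \<alpha> u else 0\<bar> \<le> \<bar>c \<alpha>\<bar> * (norm u ^ 2 + norm u ^ D)"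
        by (auto simp: abs_mult intro!: mult_left_mono)
    qed
    also have "\<dots> = M * (norm u ^ 2 + norm u ^ D)" by (simp add: M_def sum_distrib_right)
    finally show ?thesis .
  qed
  moreover have "M \<ge> 0" by (simp add: M_def sum_nonneg)
  ultimately show ?thesis by blast
qed


lemma exp_ge_1_pow:
  fixes y :: real
  assumes "0 \<le> y" "1 \<le> K"
  shows "1 + y ^ K / fact K \<le> exp y"
proof -
  have sm: "summable (\<lambda>n. y ^ n /\<^sub>R fact n)" by (rule summable_exp_generic)
  have "(\<Sum>n\<in>{0, K}. y ^ n /\<^sub>R fact n) \<le> (\<Sum>n. y ^ n /\<^sub>R fact n)"
    by (intro sum_le_suminf sm) (use assms in auto)
  then show ?thesis using assms by (simp add: exp_def divide_inverse_commute scaleR_conv_of_real)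
qed

lemma pow_le_fact_exp:
  fixes y :: real
  assumes "0 \<le> y"
  shows "y ^ K \<le> fact K * exp y"
proof (cases "K = 0")
  case True then show ?thesis using assms by simp
next
  case False
  then have "1 + y ^ K / fact K \<le> exp y" using exp_ge_1_pow[OF assms] by simp
  then have "y ^ K / fact K \<le> exp y" by simp
  then show ?thesis by (simp add: field_simps)
qed

lemma gauss1: 
  assumes b: "b > 0"
  shows "integrable lborel (\<lambda>x::real. exp (- b * x\<^sup>2))"
proof -
  define \<sigma> where "\<sigma> = sqrt (1 / (2 * b))"
  have s2: "\<sigma>\<^sup>2 = 1 / (2 * b)" using b by (simp add: \<sigma>_def)
  have sp: "\<sigma> > 0" using b by (simp add: \<sigma>_def)
  have "(\<lambda>x::real. exp (- b * x\<^sup>2)) = (\<lambda>x. sqrt (2 * pi * \<sigma>\<^sup>2) * normal_density 0 \<sigma> x)"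
  proof
    fix x :: real
    have "- (x - 0)\<^sup>2 / (2 * \<sigma>\<^sup>2) = - b * x\<^sup>2" using b by (simp add: s2)
    moreover have "sqrt (2 * pi * \<sigma>\<^sup>2) > 0" using b by (simp add: s2)
    ultimately show "exp (- b * x\<^sup>2) = sqrt (2 * pi * \<sigma>\<^sup>2) * normal_density 0 \<sigma> x"
      unfolding normal_density_def using sp by simp
  qed
  then show ?thesis using sp by simp
qed

lemma gaussN:
  assumes b: "b > 0"
  shows "integrable lborel (\<lambda>u::'a::euclidean_space. exp (- b * (norm u)\<^sup>2))"
proof (rule integrableI_bounded)
  show "(\<lambda>u::'a. exp (- b * (norm u)\<^sup>2)) \<in> borel_measurable lborel" by measurable
  have eq: "ennreal (norm (exp (- b * (norm u)\<^sup>2))) = (\<Prod>i\<in>Basis. ennreal (exp (- b * (u \<bullet> i)\<^sup>2)))" for u :: 'a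
  proof -
    have "(norm u)\<^sup>2 = u \<bullet> u" by (rule power2_norm_eq_inner)
    also have "\<dots> = (\<Sum>i\<in>Basis. (u \<bullet> i) * (u \<bullet> i))" by (rule euclidean_inner)
    finally have "(norm u)\<^sup>2 = (\<Sum>i\<in>Basis. (u \<bullet> i)\<^sup>2)" by (simp add: power2_eq_square)
    then have "exp (- b * (norm u)\<^sup>2) = (\<Prod>i\<in>Basis. exp (- b * (u \<bullet> i)\<^sup>2))"
      by (simp add: sum_distrib_left exp_sum)
    then show ?thesis by (simp add: prod_ennreal abs_of_nonneg prod_nonneg)
  qed
  have "(\<integral>\<^sup>+ u. ennreal (norm (exp (- b * (norm u)\<^sup>2))) \<partial>(lborel::'a measure))
      = (\<integral>\<^sup>+ u. (\<Prod>i\<in>Basis. ennreal (exp (- b * (u \<bullet> i)\<^sup>2))) \<partial>(lborel::'a measure))"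
    by (simp only: eq)
  also have "\<dots> = (\<Prod>i\<in>(Basis::'a set). \<integral>\<^sup>+ x. ennreal (exp (- b * x\<^sup>2)) \<partial>lborel)"
    by (rule nn_integral_lborel_prod[where f = "\<lambda>i x. ennreal (exp (- b * x\<^sup>2))"]) auto
  also have "\<dots> < \<infinity>"
  proof -
    have "(\<integral>\<^sup>+ x. ennreal (exp (- b * x\<^sup>2)) \<partial>lborel) < \<infinity>"
      using gauss1[OF b] unfolding integrable_iff_bounded by simp
    then show ?thesis by (simp add: less_top[symmetric] power_eq_top_ennreal)
  qed
  finally show "(\<integral>\<^sup>+ u. ennreal (norm (exp (- b * (norm u)\<^sup>2))) \<partial>(lborel::'a measure)) < \<infinity>" .
qed

lemma poly_exp_bound:
  fixes \<rho> :: real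
  assumes "0 \<le> \<rho>"
  shows "1 + \<rho> ^ r \<le> (2 + 4 ^ r * fact r) * exp (\<rho>\<^sup>2 / 4)"
proof -
  have "\<rho> ^ r \<le> 1 + \<rho> ^ (2 * r)"
  proof (cases "\<rho> \<le> 1")
    case True
    then have "\<rho> ^ r \<le> 1" using assms by (simp add: power_le_one)
    then show ?thesis using assms by (simp add: add_increasing2)
  next
    case False
    then have "\<rho> ^ r \<le> \<rho> ^ (2 * r)" by (intro power_increasing) auto
    then show ?thesis by simp
  qed
  also have "\<rho> ^ (2 * r) = 4 ^ r * (\<rho>\<^sup>2 / 4) ^ r"
    by (simp add: power_mult power_divide)
  also have "(\<rho>\<^sup>2 / 4) ^ r \<le> fact r * exp (\<rho>\<^sup>2 / 4)"
    by (rule pow_le_fact_exp) simp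
  finally have A: "\<rho> ^ r \<le> 1 + 4 ^ r * (fact r * exp (\<rho>\<^sup>2 / 4))" by simp
  have B: "1 \<le> exp (\<rho>\<^sup>2 / 4)" by simp
  have C: "(2 + 4 ^ r * fact r) * exp (\<rho>\<^sup>2 / 4) = 2 * exp (\<rho>\<^sup>2 / 4) + 4 ^ r * (fact r * exp (\<rho>\<^sup>2 / 4))"
    by (simp add: algebra_simps)
  show ?thesis unfolding C using A B by linarith
qed

lemma Wint:
  fixes F :: "'a::euclidean_space \<Rightarrow> real"
  assumes Fm: "F \<in> borel_measurable borel" and FB: "\<And>u. \<bar>F u\<bar> \<le> CF * (1 + norm u ^ r)"
  shows "integrable lborel (\<lambda>u. exp (- (norm u)\<^sup>2 / 2) * \<bar>F u\<bar>)"
proof (rule Bochner_Integration.integrable_bound)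
  define M where "M = \<bar>CF\<bar> * (2 + 4 ^ r * fact r)"
  show "integrable lborel (\<lambda>u::'a. M * exp (- (1/4) * (norm u)\<^sup>2))"
    by (intro integrable_mult_right gaussN) simp
  show "(\<lambda>u. exp (- (norm u)\<^sup>2 / 2) * \<bar>F u\<bar>) \<in> borel_measurable lborel"
    using Fm by measurable
  show "AE u in lborel. norm (exp (- (norm u)\<^sup>2 / 2) * \<bar>F u\<bar>) \<le> norm (M * exp (- (1/4) * (norm u)\<^sup>2))"
  proof (intro AE_I2)
    fix u :: 'a
    have "\<bar>F u\<bar> \<le> \<bar>CF\<bar> * (1 + norm u ^ r)"
      using FB[of u] by (rule order.trans) (intro mult_right_mono; simp)
    also have "\<dots> \<le> \<bar>CF\<bar> * ((2 + 4 ^ r * fact r) * exp ((norm u)\<^sup>2 / 4))"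
      by (intro mult_left_mono poly_exp_bound) auto
    finally have "exp (- (norm u)\<^sup>2 / 2) * \<bar>F u\<bar> \<le> exp (- (norm u)\<^sup>2 / 2) * (M * exp ((norm u)\<^sup>2 / 4))"
      unfolding M_def by (intro mult_left_mono) (auto simp: algebra_simps)
    also have "\<dots> = M * exp (- (1/4) * (norm u)\<^sup>2)"
      by (simp add: exp_add[symmetric] algebra_simps)
    finally show "norm (exp (- (norm u)\<^sup>2 / 2) * \<bar>F u\<bar>) \<le> norm (M * exp (- (1/4) * (norm u)\<^sup>2))"
      unfolding M_def by simp
  qed
qed


lemma summable_inv_sq: "summable (\<lambda>n. 1 / (real (Suc n))\<^sup>2)"
proof -
  have "summable (\<lambda>n. inverse (of_nat n ^ 2 :: real))" by (rule inverse_power_summable) simp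
  then have "summable (\<lambda>n. inverse (of_nat (Suc n) ^ 2 :: real))" by (subst summable_Suc_iff)
  then show ?thesis by (simp add: divide_inverse)
qed

lemma Gfun_sums:
  assumes "\<bar>y\<bar> \<le> 1"
  shows "summable (\<lambda>n. y ^ Suc n / (real (Suc n))\<^sup>2)"
proof (rule summable_comparison_test'[OF summable_inv_sq])
  fix n
  have "\<bar>y\<bar> ^ Suc n \<le> 1" using assms by (intro power_le_one) auto
  then show "norm (y ^ Suc n / (real (Suc n))\<^sup>2) \<le> 1 / (real (Suc n))\<^sup>2"
    by (simp add: abs_mult power_abs divide_right_mono del: power_Suc of_nat_Suc)
qed

lemma Bpj_meas:
  assumes am: "\<And>j. j \<in> {2..p} \<Longrightarrow> a j \<in> borel_measurable borel"
  shows "(\<lambda>u. Bpj p j (\<lambda>l. a l u) n) \<in> borel_measurable borel"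
  unfolding Bpj_def
  by (intro borel_measurable_sum borel_measurable_times borel_measurable_const borel_measurable_prod
        borel_measurable_power am) auto


lemma fixed_k:
  fixes F :: "'a::euclidean_space \<Rightarrow> real" and a :: "nat \<Rightarrow> 'a \<Rightarrow> real"
  assumes Fm: "F \<in> borel_measurable borel"
    and am: "\<And>j. j \<in> {2..p} \<Longrightarrow> a j \<in> borel_measurable borel"
    and Wi: "integrable lborel (\<lambda>u. exp (- (norm u)\<^sup>2 / 2) * \<bar>F u\<bar>)"
    and p: "p \<ge> 2" and t: "0 \<le> t" "t \<le> \<tau>" and tau: "0 < \<tau>" "\<tau> \<le> 1"
    and S: "\<And>u. 1 + (\<Sum>j=2..p. \<bar>a j u\<bar> * \<tau> ^ j) \<le> exp ((norm u)\<^sup>2 / 2)"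
  shows "(\<forall>u. \<bar>exp (- (norm u)\<^sup>2) * (1 + (\<Sum>j=2..p. a j u * t ^ j))\<bar> \<le> 1)
   \<and> integrable lborel
       (\<lambda>u. Gfun (exp (- (norm u)\<^sup>2) * (1 + (\<Sum>j=2..p. a j u * t ^ j))) * F u)
   \<and> (\<forall>n\<ge>1. integrable lborel
       (\<lambda>u. exp (- real n * (norm u)\<^sup>2) *
            (1 + (\<Sum>j=2..p. Bpj p j (\<lambda>l. a l u) n * t ^ j)) * F u))
   \<and> summable (\<lambda>n. (1 / (real (Suc n))\<^sup>2) *
       (\<integral>u. exp (- real (Suc n) * (norm u)\<^sup>2) *
            (1 + (\<Sum>j=2..p. Bpj p j (\<lambda>l. a l u) (Suc n) * t ^ j)) * F u \<partial>lborel))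
   \<and> \<bar>(\<integral>u. Gfun (exp (- (norm u)\<^sup>2) * (1 + (\<Sum>j=2..p. a j u * t ^ j))) * F u \<partial>lborel)
      - (1 / (4 * pi\<^sup>2)) * (\<Sum>n. (1 / (real (Suc n))\<^sup>2) *
          (\<integral>u. exp (- real (Suc n) * (norm u)\<^sup>2) *
            (1 + (\<Sum>j=2..p. Bpj p j (\<lambda>l. a l u) (Suc n) * t ^ j)) * F u \<partial>lborel))\<bar>
     \<le> (1 / (4 * pi\<^sup>2)) * (\<Sum>n. 1 / (real (Suc n))\<^sup>2) * (\<integral>u. exp (- (norm u)\<^sup>2 / 2) * \<bar>F u\<bar> \<partial>lborel) * (t / \<tau>) ^ (p + 1)"
proof -
  define E where "E u = exp (- (norm u)\<^sup>2) * (1 + (\<Sum>j=2..p. a j u * t ^ j))" for u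
  define PP where "PP n u = exp (- real n * (norm u)\<^sup>2) *
            (1 + (\<Sum>j=2..p. Bpj p j (\<lambda>l. a l u) n * t ^ j)) * F u" for n u
  define W where "W u = exp (- (norm u)\<^sup>2 / 2) * \<bar>F u\<bar>" for u
  define K0 where "K0 = integral\<^sup>L lborel W"
  define Z where "Z = (\<Sum>n. 1 / (real (Suc n))\<^sup>2)"
  define c0 where "c0 = 1 / (4 * pi\<^sup>2)"
  define q where "q = (t / \<tau>) ^ (p + 1)"
  have r01: "0 \<le> t / \<tau>" "t / \<tau> \<le> 1" using t tau by auto
  have q01: "0 \<le> q" "q \<le> 1" unfolding q_def
    by (rule zero_le_power[OF r01(1)], rule power_le_one[OF r01])
  have Wi': "integrable lborel W" using Wi unfolding W_def .
  have W0: "W u \<ge> 0" for u unfolding W_def by simp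
  have K00: "K0 \<ge> 0" unfolding K0_def using W0 by (simp add: integral_nonneg_AE)
  have c00: "c0 \<ge> 0" unfolding c0_def by simp
  have Ebound: "\<bar>E u\<bar> \<le> exp (- (norm u)\<^sup>2 / 2)" for u
  proof -
    have "\<bar>\<Sum>j=2..p. a j u * t ^ j\<bar> \<le> (\<Sum>j=2..p. \<bar>a j u\<bar> * \<tau> ^ j)"
      by (rule order.trans[OF sum_abs], intro sum_mono)
         (use t in \<open>auto simp: abs_mult intro!: mult_left_mono power_mono\<close>)
    then have "\<bar>1 + (\<Sum>j=2..p. a j u * t ^ j)\<bar> \<le> exp ((norm u)\<^sup>2 / 2)"
      using S[of u] by linarith
    then have "\<bar>E u\<bar> \<le> exp (- (norm u)\<^sup>2) * exp ((norm u)\<^sup>2 / 2)"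
      unfolding E_def by (simp add: abs_mult)
    also have "\<dots> = exp (- (norm u)\<^sup>2 / 2)" by (simp add: exp_add[symmetric])
    finally show ?thesis .
  qed
  have E1: "\<bar>E u\<bar> \<le> 1" for u using Ebound[of u] by (rule order.trans) simp
  have Epow: "\<bar>E u ^ n\<bar> \<le> \<bar>E u\<bar>" if "n \<ge> 1" for u n
  proof -
    have "\<bar>E u\<bar> ^ n \<le> \<bar>E u\<bar> ^ 1" using E1[of u] that by (intro power_decreasing) auto
    then show ?thesis by (simp add: power_abs)
  qed
  have key: "\<bar>E u ^ n * F u - PP n u\<bar> \<le> q * W u" if n: "n \<ge> 1" for u n
  proof -
    define x where "x = (norm u)\<^sup>2"
    have x0: "x \<ge> 0" unfolding x_def by simp
    have "E u ^ n = exp (- real n * x) * (1 + (\<Sum>j=2..p. a j u * t ^ j)) ^ n"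
      unfolding E_def x_def by (simp add: power_mult_distrib exp_of_nat_mult[symmetric])
    then have "E u ^ n * F u - PP n u = exp (- real n * x) *
        ((1 + (\<Sum>j=2..p. a j u * t ^ j)) ^ n - (1 + (\<Sum>j=2..p. Bpj p j (\<lambda>l. a l u) n * t ^ j))) * F u"
      unfolding PP_def x_def by (simp add: algebra_simps)
    then have "\<bar>E u ^ n * F u - PP n u\<bar> = exp (- real n * x) *
        \<bar>(1 + (\<Sum>j=2..p. a j u * t ^ j)) ^ n - (1 + (\<Sum>j=2..p. Bpj p j (\<lambda>l. a l u) n * t ^ j))\<bar> * \<bar>F u\<bar>"
      by (simp add: abs_mult)
    also have "\<dots> \<le> exp (- real n * x) * (q * (1 + (\<Sum>j=2..p. \<bar>a j u\<bar> * \<tau> ^ j)) ^ n) * \<bar>F u\<bar>"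
      unfolding q_def using remainder[OF p t tau(1), of "\<lambda>l. a l u" n]
      by (intro mult_right_mono mult_left_mono) auto
    also have "\<dots> \<le> exp (- real n * x) * (q * exp (x / 2) ^ n) * \<bar>F u\<bar>"
    proof -
      have Sn: "0 \<le> 1 + (\<Sum>j=2..p. \<bar>a j u\<bar> * \<tau> ^ j)"
        using tau by (intro add_nonneg_nonneg sum_nonneg) auto
      show ?thesis
        using S[of u] q01 Sn unfolding x_def
        by (intro mult_right_mono mult_left_mono power_mono) auto
    qed
    also have "\<dots> = q * exp (- real n * x / 2) * \<bar>F u\<bar>"
      by (simp add: exp_of_nat_mult[symmetric] exp_add[symmetric] algebra_simps)
    also have "\<dots> \<le> q * exp (- x / 2) * \<bar>F u\<bar>"
      using n x0 q01 by (intro mult_right_mono mult_left_mono) (auto simp: mult_le_cancel_right1 intro!: mult_right_mono)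
    finally show ?thesis unfolding W_def x_def by simp
  qed
  have sm: "(\<lambda>u. \<Sum>j=2..p. a j u * t ^ j) \<in> borel_measurable borel"
    by (intro borel_measurable_sum borel_measurable_times borel_measurable_const am) auto
  have Em: "E \<in> borel_measurable borel" unfolding E_def using sm by measurable
  have PPm: "PP n \<in> borel_measurable borel" for n
  proof -
    have "(\<lambda>u. \<Sum>j=2..p. Bpj p j (\<lambda>l. a l u) n * t ^ j) \<in> borel_measurable borel"
      by (intro borel_measurable_sum borel_measurable_times borel_measurable_const Bpj_meas am) auto
    then show ?thesis unfolding PP_def using Fm by measurable
  qed
  have EFi: "integrable lborel (\<lambda>u. E u ^ n * F u)" if "n \<ge> 1" for n
  proof (rule Bochner_Integration.integrable_bound[OF Wi'])
    show "(\<lambda>u. E u ^ n * F u) \<in> borel_measurable lborel" using Em Fm by measurable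
    show "AE u in lborel. norm (E u ^ n * F u) \<le> norm (W u)"
    proof (intro AE_I2)
      fix u
      have "\<bar>E u ^ n\<bar> * \<bar>F u\<bar> \<le> exp (- (norm u)\<^sup>2 / 2) * \<bar>F u\<bar>"
        using Epow[OF that, of u] Ebound[of u] by (intro mult_right_mono) auto
      then show "norm (E u ^ n * F u) \<le> norm (W u)" unfolding W_def by (simp add: abs_mult)
    qed
  qed
  have PPi: "integrable lborel (PP n)" if "n \<ge> 1" for n
  proof (rule Bochner_Integration.integrable_bound)
    show "integrable lborel (\<lambda>u. 2 * W u)" using Wi' by simp
    show "PP n \<in> borel_measurable lborel" using PPm by simp
    show "AE u in lborel. norm (PP n u) \<le> norm (2 * W u)"
    proof (intro AE_I2)
      fix u
      have "\<bar>E u ^ n * F u\<bar> \<le> W u"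
        using Epow[OF that, of u] Ebound[of u] unfolding W_def by (simp add: abs_mult mult_right_mono)
      moreover have "q * W u \<le> W u" using q01 W0[of u] by (simp add: mult_left_le_one_le)
      ultimately show "norm (PP n u) \<le> norm (2 * W u)"
        using key[OF that, of u] W0[of u] by simp
    qed
  qed
  define I where "I n = (\<integral>u. E u ^ n * F u \<partial>lborel)" for n
  define J where "J n = integral\<^sup>L lborel (PP n)" for n
  have IJ: "\<bar>I n - J n\<bar> \<le> q * K0" if "n \<ge> 1" for n
  proof -
    have "I n - J n = (\<integral>u. E u ^ n * F u - PP n u \<partial>lborel)"
      unfolding I_def J_def using EFi[OF that] PPi[OF that] by (simp add: Bochner_Integration.integral_diff)
    also have "\<bar>\<dots>\<bar> \<le> (\<integral>u. q * W u \<partial>lborel)"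
      using EFi[OF that] PPi[OF that] Wi' key[OF that]
      by (intro integral_abs_bound_integral) auto
    also have "\<dots> = q * K0" unfolding K0_def by simp
    finally show ?thesis .
  qed
  have Ib: "\<bar>I n\<bar> \<le> K0" if "n \<ge> 1" for n
  proof -
    have "\<bar>I n\<bar> \<le> integral\<^sup>L lborel W"
      unfolding I_def using EFi[OF that] Wi'
    proof (intro integral_abs_bound_integral)
      fix u
      show "\<bar>E u ^ n * F u\<bar> \<le> W u"
        using Epow[OF that, of u] Ebound[of u] unfolding W_def by (simp add: abs_mult mult_right_mono)
    qed auto
    then show ?thesis unfolding K0_def .
  qed
  have Jb: "\<bar>J n\<bar> \<le> 2 * K0" if "n \<ge> 1" for n
    using IJ[OF that] Ib[OF that] q01 K00 mult_left_le_one_le[of K0 q] by linarith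
  have sumJ: "summable (\<lambda>n. (1 / (real (Suc n))\<^sup>2) * J (Suc n))"
  proof (rule summable_comparison_test'[where g = "\<lambda>n. 2 * K0 * (1 / (real (Suc n))\<^sup>2)"])
    show "summable (\<lambda>n. 2 * K0 * (1 / (real (Suc n))\<^sup>2))"
      by (intro summable_mult summable_inv_sq)
    fix n :: nat
    show "norm (1 / (real (Suc n))\<^sup>2 * J (Suc n)) \<le> 2 * K0 * (1 / (real (Suc n))\<^sup>2)"
      using Jb[of "Suc n"] by (simp add: abs_mult field_simps del: of_nat_Suc)
  qed
  have sumI: "summable (\<lambda>n. (1 / (real (Suc n))\<^sup>2) * I (Suc n))"
  proof (rule summable_comparison_test'[where g = "\<lambda>n. K0 * (1 / (real (Suc n))\<^sup>2)"])
    show "summable (\<lambda>n. K0 * (1 / (real (Suc n))\<^sup>2))"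
      by (intro summable_mult summable_inv_sq)
    fix n :: nat
    show "norm (1 / (real (Suc n))\<^sup>2 * I (Suc n)) \<le> K0 * (1 / (real (Suc n))\<^sup>2)"
      using Ib[of "Suc n"] by (simp add: abs_mult field_simps del: of_nat_Suc)
  qed
  define f where "f i u = c0 * (E u ^ Suc i / (real (Suc i))\<^sup>2 * F u)" for i u
  have Gser: "Gfun (E u) * F u = (\<Sum>i. f i u)" for u
  proof -
    have sm: "summable (\<lambda>n. E u ^ Suc n / (real (Suc n))\<^sup>2)" by (rule Gfun_sums[OF E1])
    have "Gfun (E u) * F u = c0 * ((\<Sum>n. E u ^ Suc n / (real (Suc n))\<^sup>2) * F u)"
      unfolding Gfun_def c0_def by simp
    also have "\<dots> = c0 * (\<Sum>n. E u ^ Suc n / (real (Suc n))\<^sup>2 * F u)"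
      by (simp only: suminf_mult2[OF sm])
    also have "\<dots> = (\<Sum>n. f n u)"
      unfolding f_def by (rule suminf_mult[symmetric]) (intro summable_mult2 sm)
    finally show ?thesis .
  qed
  have f_eq: "f i = (\<lambda>u. c0 * (1 / (real (Suc i))\<^sup>2) * (E u ^ Suc i * F u))" for i
    unfolding f_def by (auto simp: field_simps)
  have fi: "integrable lborel (f i)" for i
    unfolding f_eq using EFi[of "Suc i"] by (intro integrable_mult_right) simp
  have fbound: "\<bar>f i u\<bar> \<le> c0 * W u * (1 / (real (Suc i))\<^sup>2)" for i u
  proof -
    have "\<bar>E u ^ Suc i * F u\<bar> \<le> W u"
      using Epow[of "Suc i" u] Ebound[of u] unfolding W_def by (simp add: abs_mult mult_right_mono del: power_Suc)
    then show ?thesis unfolding f_def using c00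
      by (simp add: abs_mult field_simps mult_left_mono del: of_nat_Suc power_Suc)
  qed
  have fsum_pt: "summable (\<lambda>i. norm (f i u))" for u
  proof (rule summable_comparison_test'[where g = "\<lambda>i. c0 * W u * (1 / (real (Suc i))\<^sup>2)"])
    show "summable (\<lambda>i. c0 * W u * (1 / (real (Suc i))\<^sup>2))" by (intro summable_mult summable_inv_sq)
    show "norm (norm (f i u)) \<le> c0 * W u * (1 / (real (Suc i))\<^sup>2)" for i using fbound[of i u] by simp
  qed
  have fint_bound: "(\<integral>u. norm (f i u) \<partial>lborel) \<le> c0 * K0 * (1 / (real (Suc i))\<^sup>2)" for i
  proof -
    have "(\<integral>u. norm (f i u) \<partial>lborel) \<le> (\<integral>u. c0 * W u * (1 / (real (Suc i))\<^sup>2) \<partial>lborel)"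
      using fi[of i] Wi' fbound by (intro integral_mono) auto
    then show ?thesis unfolding K0_def by simp
  qed
  have fsum_int: "summable (\<lambda>i. \<integral>u. norm (f i u) \<partial>lborel)"
  proof (rule summable_comparison_test'[where g = "\<lambda>i. c0 * K0 * (1 / (real (Suc i))\<^sup>2)"])
    show "summable (\<lambda>i. c0 * K0 * (1 / (real (Suc i))\<^sup>2))" by (intro summable_mult summable_inv_sq)
    show "norm (\<integral>u. norm (f i u) \<partial>lborel) \<le> c0 * K0 * (1 / (real (Suc i))\<^sup>2)" for i
      using fint_bound[of i] by (simp add: integral_nonneg_AE)
  qed
  have Gint: "integrable lborel (\<lambda>u. Gfun (E u) * F u)"
    unfolding Gser by (rule integrable_suminf[OF fi AE_I2[OF fsum_pt] fsum_int])
  have Gval: "(\<integral>u. Gfun (E u) * F u \<partial>lborel) = (\<Sum>i. integral\<^sup>L lborel (f i))"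
    unfolding Gser by (rule integral_suminf[OF fi AE_I2[OF fsum_pt] fsum_int])
  have fI: "integral\<^sup>L lborel (f i) = c0 * ((1 / (real (Suc i))\<^sup>2) * I (Suc i))" for i
  proof -
    show ?thesis unfolding I_def f_eq by simp
  qed
  have Gval2: "(\<integral>u. Gfun (E u) * F u \<partial>lborel) = c0 * (\<Sum>n. (1 / (real (Suc n))\<^sup>2) * I (Suc n))"
    unfolding Gval fI by (rule suminf_mult[OF sumI])
  have "(\<integral>u. Gfun (E u) * F u \<partial>lborel) - c0 * (\<Sum>n. (1 / (real (Suc n))\<^sup>2) * J (Suc n))
      = c0 * (\<Sum>n. (1 / (real (Suc n))\<^sup>2) * (I (Suc n) - J (Suc n)))"
    unfolding Gval2 right_diff_distrib[symmetric] suminf_diff[OF sumI sumJ]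
    by (simp add: right_diff_distrib)
  also have "\<bar>\<dots>\<bar> \<le> c0 * (Z * K0 * q)"
  proof -
    have "norm (\<Sum>n. (1 / (real (Suc n))\<^sup>2) * (I (Suc n) - J (Suc n))) \<le> (\<Sum>n. (1 / (real (Suc n))\<^sup>2) * (q * K0))"
    proof (rule norm_suminf_le)
      fix n :: nat
      show "norm ((1 / (real (Suc n))\<^sup>2) * (I (Suc n) - J (Suc n))) \<le> (1 / (real (Suc n))\<^sup>2) * (q * K0)"
        using IJ[of "Suc n"] by (simp add: abs_mult divide_right_mono del: of_nat_Suc)
      show "summable (\<lambda>n. (1 / (real (Suc n))\<^sup>2) * (q * K0))"
        by (intro summable_mult2 summable_inv_sq)
    qed
    then have "\<bar>\<Sum>n. (1 / (real (Suc n))\<^sup>2) * (I (Suc n) - J (Suc n))\<bar> \<le> (\<Sum>n. (1 / (real (Suc n))\<^sup>2) * (q * K0))"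
      by simp
    also have "\<dots> = Z * K0 * q"
      unfolding Z_def by (subst suminf_mult2[OF summable_inv_sq, symmetric]) (simp add: algebra_simps)
    finally show ?thesis using c00 by (simp add: abs_mult mult_left_mono)
  qed
  finally have final: "\<bar>(\<integral>u. Gfun (E u) * F u \<partial>lborel) - c0 * (\<Sum>n. (1 / (real (Suc n))\<^sup>2) * J (Suc n))\<bar>
      \<le> c0 * (Z * K0 * q)" .
  show ?thesis
    using E1 Gint PPi sumJ final
    unfolding E_def[abs_def] PP_def[abs_def] J_def c0_def Z_def K0_def W_def q_def
    by (simp add: algebra_simps)
qed


lemma poly_meas:
  fixes f :: "complex^'m \<Rightarrow> real"
  assumes "poly_fun_deg d f"
  shows "f \<in> borel_measurable borel"
proof -
  have [measurable]: "(\<lambda>x::complex^'m. x $ i) \<in> borel_measurable borel" for i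
    by (intro borel_measurable_continuous_onI continuous_on_component continuous_on_id)
  obtain c where c: "\<And>u. f u = (\<Sum>\<alpha>\<in>{\<alpha>. (\<Sum>i\<in>UNIV. fst (\<alpha> i) + snd (\<alpha> i)) \<le> d}.
                 c \<alpha> * (\<Prod>i\<in>UNIV. Re (u $ i) ^ fst (\<alpha> i) * Im (u $ i) ^ snd (\<alpha> i)))"
    using assms unfolding poly_fun_deg_def by blast
  have "f = (\<lambda>u. \<Sum>\<alpha>\<in>{\<alpha>. (\<Sum>i\<in>UNIV. fst (\<alpha> i) + snd (\<alpha> i)) \<le> d}.
                 c \<alpha> * (\<Prod>i\<in>UNIV. Re (u $ i) ^ fst (\<alpha> i) * Im (u $ i) ^ snd (\<alpha> i)))"
    using c by auto
  also have "\<dots> \<in> borel_measurable borel" by measurable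
  finally show ?thesis .
qed

lemma tau_exists:
  fixes c :: real
  assumes c: "c \<ge> 0" and K: "K \<ge> 1"
  shows "\<exists>\<tau>. 0 < \<tau> \<and> \<tau> \<le> 1 \<and> (\<forall>\<rho>\<ge>0. 1 + \<tau>\<^sup>2 * (c * (\<rho>\<^sup>2 + \<rho> ^ (2 * K))) \<le> exp (\<rho>\<^sup>2 / 2))"
proof -
  define M :: real where "M = 2 + 2 ^ K * fact K"
  define \<tau> where "\<tau> = 1 / (1 + c * M)"
  have M0: "M > 0" unfolding M_def by (simp add: add_pos_nonneg)
  have cM: "c * M \<ge> 0" using c M0 by simp
  have t0: "0 < \<tau>" "\<tau> \<le> 1" unfolding \<tau>_def using cM by auto
  have tcM: "\<tau>\<^sup>2 * (c * M) \<le> 1"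
  proof -
    have "\<tau>\<^sup>2 \<le> \<tau>" using t0 by (simp add: power2_eq_square mult_left_le_one_le)
    then have "\<tau>\<^sup>2 * (c * M) \<le> \<tau> * (c * M)" using cM by (rule mult_right_mono)
    also have "\<dots> = c * M / (1 + c * M)" unfolding \<tau>_def by simp
    also have "\<dots> \<le> 1" using cM by simp
    finally show ?thesis .
  qed
  have "1 + \<tau>\<^sup>2 * (c * (\<rho>\<^sup>2 + \<rho> ^ (2 * K))) \<le> exp (\<rho>\<^sup>2 / 2)" if \<rho>: "\<rho> \<ge> 0" for \<rho> :: real
  proof -
    define y where "y = \<rho>\<^sup>2 / 2"
    have y0: "y \<ge> 0" unfolding y_def by simp
    have h1: "1 + y \<le> exp y" by (rule exp_ge_add_one_self)
    have h2: "\<rho>\<^sup>2 = 2 * y" by (simp add: y_def)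
    have e1: "\<rho>\<^sup>2 \<le> 2 * (exp y - 1)" unfolding h2 using h1 by (smt (verit))
    have "1 + y ^ K / fact K \<le> exp y" by (rule exp_ge_1_pow[OF y0 K])
    then have "y ^ K \<le> fact K * (exp y - 1)" by (simp add: field_simps)
    moreover have "\<rho> ^ (2 * K) = 2 ^ K * y ^ K"
      unfolding y_def by (simp add: power_mult power_divide)
    ultimately have e2: "\<rho> ^ (2 * K) \<le> 2 ^ K * fact K * (exp y - 1)"
      by (simp add: mult.assoc mult_left_mono)
    have "\<rho>\<^sup>2 + \<rho> ^ (2 * K) \<le> M * (exp y - 1)" using e1 e2 unfolding M_def by (simp add: algebra_simps)
    then have "\<tau>\<^sup>2 * (c * (\<rho>\<^sup>2 + \<rho> ^ (2 * K))) \<le> \<tau>\<^sup>2 * (c * (M * (exp y - 1)))"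
      using c by (intro mult_left_mono) auto
    also have "\<dots> = (\<tau>\<^sup>2 * (c * M)) * (exp y - 1)" by (simp add: algebra_simps)
    also have "\<dots> \<le> 1 * (exp y - 1)"
      using tcM y0 by (intro mult_right_mono) auto
    finally show ?thesis unfolding y_def by simp
  qed
  then show ?thesis using t0 by blast
qed


lemma conj5_trans: "P1 \<and> P2 \<and> P3 \<and> P4 \<and> x \<le> y \<Longrightarrow> y \<le> z \<Longrightarrow> P1 \<and> P2 \<and> P3 \<and> P4 \<and> x \<le> (z::real)"
  by auto

theorem lemma4p2:
  fixes F :: "complex^'m \<Rightarrow> real"
    and a :: "nat \<Rightarrow> complex^'m \<Rightarrow> real"
    and p :: nat
  assumes F_cont: "continuous_on UNIV F"
    and F_growth: "\<exists>C r. \<forall>u. \<bar>F u\<bar> \<le> C * (1 + norm u ^ r)"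
    and p_ge: "p \<ge> 2"
    and a_poly: "\<And>j. j \<in> {2..p} \<Longrightarrow> poly_fun_deg (5 * j) (a j)"
    and a_parity: "\<And>j u. j \<in> {2..p} \<Longrightarrow> a j (- u) = (-1) ^ j * a j u"
    and a_zero: "\<And>j. j \<in> {2..p} \<Longrightarrow> a j 0 = 0"
    and a_deriv: "\<And>j. j \<in> {2..p} \<Longrightarrow> (a j has_derivative (\<lambda>_. 0)) (at 0)"
  shows "\<exists>K::nat. \<exists>C::real. \<forall>k\<ge>K.
     (\<forall>u. \<bar>exp (- (norm u)\<^sup>2) * (1 + (\<Sum>j=2..p. a j u * real k powr (- real j / 2)))\<bar> \<le> 1)
   \<and> integrable lborel
       (\<lambda>u. Gfun (exp (- (norm u)\<^sup>2) * (1 + (\<Sum>j=2..p. a j u * real k powr (- real j / 2)))) * F u)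
   \<and> (\<forall>n\<ge>1. integrable lborel
       (\<lambda>u. exp (- real n * (norm u)\<^sup>2) *
            (1 + (\<Sum>j=2..p. Bpj p j (\<lambda>l. a l u) n * real k powr (- real j / 2))) * F u))
   \<and> summable (\<lambda>n. (1 / (real (Suc n))\<^sup>2) *
       (\<integral>u. exp (- real (Suc n) * (norm u)\<^sup>2) *
            (1 + (\<Sum>j=2..p. Bpj p j (\<lambda>l. a l u) (Suc n) * real k powr (- real j / 2))) * F u \<partial>lborel))
   \<and> \<bar>(\<integral>u. Gfun (exp (- (norm u)\<^sup>2) * (1 + (\<Sum>j=2..p. a j u * real k powr (- real j / 2)))) * F u \<partial>lborel)
      - (1 / (4 * pi\<^sup>2)) * (\<Sum>n. (1 / (real (Suc n))\<^sup>2) *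
          (\<integral>u. exp (- real (Suc n) * (norm u)\<^sup>2) *
            (1 + (\<Sum>j=2..p. Bpj p j (\<lambda>l. a l u) (Suc n) * real k powr (- real j / 2))) * F u \<partial>lborel))\<bar>
     \<le> C * real k powr (- real p / 2 - 1 / 4)"
proof -
  obtain CF r where CF: "\<And>u. \<bar>F u\<bar> \<le> CF * (1 + norm u ^ r)" using F_growth by blast
  have Fm: "F \<in> borel_measurable borel" using F_cont by (rule borel_measurable_continuous_onI)
  have am: "\<And>j. j \<in> {2..p} \<Longrightarrow> a j \<in> borel_measurable borel" using a_poly poly_meas by blast
  define K where "K = 5 * p"
  have K1: "K \<ge> 1" using p_ge by (simp add: K_def)
  have bj: "\<forall>j\<in>{2..p}. \<exists>c. c \<ge> 0 \<and> (\<forall>u. \<bar>a j u\<bar> \<le> c * ((norm u)\<^sup>2 + norm u ^ (2 * K)))"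
  proof
    fix j assume j: "j \<in> {2..p}"
    have "5 * j \<le> 2 * K" "2 \<le> 2 * K" using j p_ge by (auto simp: K_def)
    then show "\<exists>c. c \<ge> 0 \<and> (\<forall>u. \<bar>a j u\<bar> \<le> c * ((norm u)\<^sup>2 + norm u ^ (2 * K)))"
      using poly_bound[OF a_poly[OF j] a_zero[OF j] a_deriv[OF j]] by blast
  qed
  obtain cf where cf: "\<forall>j\<in>{2..p}. cf j \<ge> 0 \<and> (\<forall>u. \<bar>a j u\<bar> \<le> cf j * ((norm u)\<^sup>2 + norm u ^ (2 * K)))"
    using bchoice[OF bj] by blast
  define ct where "ct = (\<Sum>j=2..p. cf j)"
  have ct0: "ct \<ge> 0" unfolding ct_def using cf by (intro sum_nonneg) auto
  have Abound: "(\<Sum>j=2..p. \<bar>a j u\<bar>) \<le> ct * ((norm u)\<^sup>2 + norm u ^ (2 * K))" for u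
    unfolding ct_def sum_distrib_right using cf by (intro sum_mono) auto
  obtain \<tau> where tau: "0 < \<tau>" "\<tau> \<le> 1"
    and tauP: "\<And>\<rho>. \<rho> \<ge> 0 \<Longrightarrow> 1 + \<tau>\<^sup>2 * (ct * (\<rho>\<^sup>2 + \<rho> ^ (2 * K))) \<le> exp (\<rho>\<^sup>2 / 2)"
    using tau_exists[OF ct0 K1] by blast
  have S: "1 + (\<Sum>j=2..p. \<bar>a j u\<bar> * \<tau> ^ j) \<le> exp ((norm u)\<^sup>2 / 2)" for u
  proof -
    have "(\<Sum>j=2..p. \<bar>a j u\<bar> * \<tau> ^ j) \<le> (\<Sum>j=2..p. \<bar>a j u\<bar> * \<tau>\<^sup>2)"
      using tau by (intro sum_mono mult_left_mono power_decreasing) auto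
    also have "\<dots> = \<tau>\<^sup>2 * (\<Sum>j=2..p. \<bar>a j u\<bar>)" by (simp add: sum_distrib_left mult.commute)
    also have "\<dots> \<le> \<tau>\<^sup>2 * (ct * ((norm u)\<^sup>2 + norm u ^ (2 * K)))"
      by (intro mult_left_mono Abound) simp
    finally show ?thesis using tauP[of "norm u"] by simp
  qed
  have Wi: "integrable lborel (\<lambda>u. exp (- (norm u)\<^sup>2 / 2) * \<bar>F u\<bar>)"
    by (rule Wint[OF Fm CF])
  define Z where "Z = (\<Sum>n. 1 / (real (Suc n))\<^sup>2)"
  define K0 where "K0 = (\<integral>u. exp (- (norm u)\<^sup>2 / 2) * \<bar>F u\<bar> \<partial>lborel)"
  have Z0: "Z \<ge> 0" unfolding Z_def by (intro suminf_nonneg summable_inv_sq) simp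
  have K00: "K0 \<ge> 0" unfolding K0_def by (intro integral_nonneg_AE) simp
  define Kn where "Kn = nat \<lceil>1 / \<tau>\<^sup>2\<rceil> + 1"
  define Cc where "Cc = (1 / (4 * pi\<^sup>2)) * Z * K0 / \<tau> ^ (p + 1)"
  have Cc0: "Cc \<ge> 0" unfolding Cc_def using Z0 K00 tau by simp
  show ?thesis
  proof (intro exI[of _ Kn] exI[of _ Cc] allI impI)
    fix k assume k: "Kn \<le> k"
    have k1: "real k \<ge> 1" using k unfolding Kn_def by linarith
    have k2: "real k \<ge> 1 / \<tau>\<^sup>2" using k unfolding Kn_def by linarith
    define t where "t = real k powr (- 1 / 2)"
    have tpos: "t > 0" unfolding t_def using k1 by simp
    have tj: "real k powr (- real j / 2) = t ^ j" for j
    proof -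
      have "t ^ j = t powr real j" using tpos by (simp add: powr_realpow)
      also have "\<dots> = real k powr (- 1 / 2 * real j)" unfolding t_def by (simp add: powr_powr)
      finally show ?thesis by simp
    qed
    have tt: "t \<le> \<tau>"
    proof -
      have "t = inverse (sqrt (real k))" unfolding t_def using k1
        by (simp add: powr_minus[of "real k" "1/2", simplified] powr_half_sqrt)
      moreover have "sqrt (real k) \<ge> 1 / \<tau>"
      proof -
        have "sqrt (real k) \<ge> sqrt (1 / \<tau>\<^sup>2)" using k2 by simp
        also have "sqrt (1 / \<tau>\<^sup>2) = 1 / \<tau>" using tau by (simp add: real_sqrt_divide)
        finally show ?thesis .
      qed
      moreover have "1 / \<tau> > 0" using tau by simp
      ultimately have "t \<le> inverse (1 / \<tau>)" by (metis le_imp_inverse_le)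
      then show ?thesis by simp
    qed
    note m = fixed_k[OF Fm am Wi p_ge less_imp_le[OF tpos] tt tau S]
    have fin: "(1 / (4 * pi\<^sup>2)) * Z * K0 * (t / \<tau>) ^ (p + 1) \<le> Cc * real k powr (- real p / 2 - 1 / 4)"
    proof -
      have "(1 / (4 * pi\<^sup>2)) * Z * K0 * (t / \<tau>) ^ (p + 1) = Cc * t ^ (p + 1)"
        unfolding Cc_def by (simp add: power_divide)
      also have "t ^ (p + 1) = real k powr (- real (p + 1) / 2)" by (rule tj[symmetric])
      also have "\<dots> \<le> real k powr (- real p / 2 - 1 / 4)"
        using k1 by (intro powr_mono) auto
      finally show ?thesis using Cc0 by (simp add: mult_left_mono)
    qed
    show "(\<forall>u. \<bar>exp (- (norm u)\<^sup>2) * (1 + (\<Sum>j = 2..p. a j u * real k powr (- real j / 2)))\<bar> \<le> 1) \<and>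
         integrable lborel (\<lambda>u. Gfun (exp (- (norm u)\<^sup>2) * (1 + (\<Sum>j = 2..p. a j u * real k powr (- real j / 2)))) * F u) \<and>
         (\<forall>n\<ge>1. integrable lborel (\<lambda>u. exp (- real n * (norm u)\<^sup>2) * (1 + (\<Sum>j = 2..p. Bpj p j (\<lambda>l. a l u) n * real k powr (- real j / 2))) * F u)) \<and>
         summable (\<lambda>n. 1 / (real (Suc n))\<^sup>2 * (\<integral>u. exp (- real (Suc n) * (norm u)\<^sup>2) * (1 + (\<Sum>j = 2..p. Bpj p j (\<lambda>l. a l u) (Suc n) * real k powr (- real j / 2))) * F u \<partial>lborel)) \<and>
         \<bar>(\<integral>u. Gfun (exp (- (norm u)\<^sup>2) * (1 + (\<Sum>j = 2..p. a j u * real k powr (- real j / 2)))) * F u \<partial>lborel) -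
          1 / (4 * pi\<^sup>2) * (\<Sum>n. 1 / (real (Suc n))\<^sup>2 * (\<integral>u. exp (- real (Suc n) * (norm u)\<^sup>2) * (1 + (\<Sum>j = 2..p. Bpj p j (\<lambda>l. a l u) (Suc n) * real k powr (- real j / 2))) * F u \<partial>lborel))\<bar>
         \<le> Cc * real k powr (- real p / 2 - 1 / 4)"
      unfolding tj by (rule conj5_trans[OF m fin[unfolded Z_def K0_def]])
  qed
qed

end
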